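(* Let $$A=\begin{bmatrix}1&1&1&1\\1&1&1&1\\1&0&0&0\end{bmatrix}.$$ For every integer $k\geq 1$ there exists an integer $m\leq 64k+1$ such that $$\mathrm{forb}(m,A)\geq \frac53\binom{m}{2}+\binom{m}{1}+\binom{m}{0}+k.$$
   Context: A simple $0$-$1$ matrix is one with no repeated columns; an $m\times n$ simple $0$-$1$ matrix is identified with a family of $n$ distinct subsets of $[m]$ (rows index elements, columns index sets). A matrix $M$ has configuration $F$ if some submatrix of $M$ is a row and column permutation of $F$. $\mathrm{forb}(m,F)$ denotes the maximum number of columns of an $m$-rowed simple $0$-$1$ matrix that does not have configuration $F$. A triple system of order $m$ and multiplicity $\lambda$ is a family of $3$-element subsets (blocks) of an $m$-element set in which every pair of distinct elements lies in exactly $\lambda$ blocks. *)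

theory Defs
  imports Complex_Main
begin

text \<open>A simple m-rowed 0-1 matrix is a family Fam of distinct subsets of [m] = {0..<m}
  (column = set of rows where the entry is 1). A configuration F is a p x q 0-1 matrix,
  given as a predicate F i j (i<p row, j<q column; True = entry 1).\<close>

definition simple_matrix :: "nat \<Rightarrow> nat set set \<Rightarrow> bool" where
  "simple_matrix m Fam \<longleftrightarrow> Fam \<subseteq> Pow {..<m}"

definition has_config :: "nat \<Rightarrow> nat set set \<Rightarrow> nat \<Rightarrow> nat \<Rightarrow> (nat \<Rightarrow> nat \<Rightarrow> bool) \<Rightarrow> bool" where
  "has_config m Fam p q F \<longleftrightarrow>
     (\<exists>r c. inj_on r {..<p} \<and> r ` {..<p} \<subseteq> {..<m} \<and>
            inj_on c {..<q} \<and> c ` {..<q} \<subseteq> Fam \<and>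
            (\<forall>i<p. \<forall>j<q. (r i \<in> c j) = F i j))"

definition forb :: "nat \<Rightarrow> nat \<Rightarrow> nat \<Rightarrow> (nat \<Rightarrow> nat \<Rightarrow> bool) \<Rightarrow> nat" where
  "forb m p q F = Max {card Fam | Fam. simple_matrix m Fam \<and> \<not> has_config m Fam p q F}"

definition matA :: "nat \<Rightarrow> nat \<Rightarrow> bool" where
  "matA i j \<longleftrightarrow> (i \<le> 1 \<or> j = 0)"

end

theory Submission
  imports Defs
begin


datatype f4 = Z | I | W | V

fun add4 :: "f4 \<Rightarrow> f4 \<Rightarrow> f4" where
  "add4 Z x = x" | "add4 x Z = x"
| "add4 I I = Z" | "add4 I W = V" | "add4 I V = W"
| "add4 W I = V" | "add4 W W = Z" | "add4 W V = I"
| "add4 V I = W" | "add4 V W = I" | "add4 V V = Z"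

fun mul4 :: "f4 \<Rightarrow> f4 \<Rightarrow> f4" where
  "mul4 Z x = Z" | "mul4 x Z = Z"
| "mul4 I x = x" | "mul4 x I = x"
| "mul4 W W = V" | "mul4 W V = I"
| "mul4 V W = I" | "mul4 V V = W"

lemma add_Z[simp]: "add4 x Z = x" by (cases x; simp)
lemma mul_Z[simp]: "mul4 x Z = Z" by (cases x; simp)
lemma f4_a: "add4 p (mul4 Z d) = p" by (cases p; cases d; simp)
lemma f4_b: "add4 p (mul4 I (add4 p q)) = q" by (cases p; cases q; simp)
lemma f4_c: "d \<noteq> Z \<Longrightarrow> add4 p (mul4 t d) = add4 p (mul4 t' d) \<Longrightarrow> t = t'"
  by (cases p; cases t; cases t'; cases d; simp)
lemma f4_d: "add4 (add4 p (mul4 s d)) (mul4 u (add4 (add4 p (mul4 s d)) (add4 p (mul4 t d))))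
   = add4 p (mul4 (add4 s (mul4 u (add4 s t))) d)"
  by (cases p; cases s; cases t; cases u; cases d; simp)
lemma f4_e: "add4 a b = Z \<Longrightarrow> a = b" by (cases a; cases b; simp)


definition vadd :: "f4 list \<Rightarrow> f4 list \<Rightarrow> f4 list" where "vadd xs ys = map2 add4 xs ys"
definition smul :: "f4 \<Rightarrow> f4 list \<Rightarrow> f4 list" where "smul t xs = map (mul4 t) xs"
definition Lin :: "f4 list \<Rightarrow> f4 list \<Rightarrow> f4 list set" where
  "Lin p q = (\<lambda>t. vadd p (smul t (vadd p q))) ` {Z,I,W,V}"

lemma len_vadd[simp]: "length (vadd xs ys) = min (length xs) (length ys)" by (simp add: vadd_def)
lemma len_smul[simp]: "length (smul t xs) = length xs" by (simp add: smul_def)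
lemma nth_vadd[simp]: "i < length xs \<Longrightarrow> i < length ys \<Longrightarrow> vadd xs ys ! i = add4 (xs!i) (ys!i)"
  by (simp add: vadd_def)
lemma nth_smul[simp]: "i < length xs \<Longrightarrow> smul t xs ! i = mul4 t (xs!i)" by (simp add: smul_def)

lemma f4_univ: "(UNIV::f4 set) = {Z,I,W,V}" using f4.exhaust by blast

lemma Lin_len: "length p = N \<Longrightarrow> length q = N \<Longrightarrow> x \<in> Lin p q \<Longrightarrow> length x = N"
  by (auto simp: Lin_def)

lemma Lin_p: "length p = length q \<Longrightarrow> p \<in> Lin p q"
proof -
  assume h: "length p = length q"
  have "vadd p (smul Z (vadd p q)) = p"
    by (rule nth_equalityI) (auto simp: h f4_a)
  then show ?thesis unfolding Lin_def by (metis insertI1 rev_image_eqI)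
qed

lemma Lin_q: "length p = length q \<Longrightarrow> q \<in> Lin p q"
proof -
  assume h: "length p = length q"
  have "vadd p (smul I (vadd p q)) = q"
    by (rule nth_equalityI) (auto simp: h f4_b)
  then show ?thesis unfolding Lin_def by (metis insertI1 insertI2 rev_image_eqI)
qed

lemma Lin_card: assumes "length p = length q" "p \<noteq> q" shows "card (Lin p q) = 4"
proof -
  obtain i where i: "i < length p" "p!i \<noteq> q!i" using assms nth_equalityI by blast
  have d: "add4 (p!i) (q!i) \<noteq> Z" using i f4_e by blast
  have "inj_on (\<lambda>t. vadd p (smul t (vadd p q))) {Z,I,W,V}"
  proof (rule inj_onI)
    fix t t' assume "vadd p (smul t (vadd p q)) = vadd p (smul t' (vadd p q))"
    then have "vadd p (smul t (vadd p q)) ! i = vadd p (smul t' (vadd p q)) ! i" by simp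
    then have "add4 (p!i) (mul4 t (add4 (p!i) (q!i))) = add4 (p!i) (mul4 t' (add4 (p!i) (q!i)))"
      using i assms(1) by simp
    then show "t = t'" using f4_c d by blast
  qed
  then show ?thesis unfolding Lin_def by (simp add: card_image)
qed

lemma Lin_sub: assumes "length p = length q" "p \<noteq> q" "x \<in> Lin p q" "y \<in> Lin p q"
  shows "Lin x y \<subseteq> Lin p q"
proof
  fix z assume "z \<in> Lin x y"
  then obtain u where u: "z = vadd x (smul u (vadd x y))" by (auto simp: Lin_def)
  obtain s where s: "x = vadd p (smul s (vadd p q))" using assms(3) by (auto simp: Lin_def)
  obtain t where t: "y = vadd p (smul t (vadd p q))" using assms(4) by (auto simp: Lin_def)
  have "z = vadd p (smul (add4 s (mul4 u (add4 s t))) (vadd p q))"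
    unfolding u s t by (rule nth_equalityI) (auto simp: assms(1) f4_d)
  moreover have "add4 s (mul4 u (add4 s t)) \<in> {Z,I,W,V}" using f4_univ by blast
  ultimately show "z \<in> Lin p q" unfolding Lin_def by blast
qed

lemma Lin_eq: assumes "length p = length q" "p \<noteq> q" "x \<in> Lin p q" "y \<in> Lin p q" "x \<noteq> y"
  shows "Lin x y = Lin p q"
proof -
  have lx: "length x = length y" using Lin_len assms by (metis)
  show ?thesis
    apply (rule card_subset_eq)
    apply (simp add: Lin_def)
    apply (rule Lin_sub[OF assms(1-4)])
    using Lin_card[OF lx assms(5)] Lin_card[OF assms(1,2)] by simp
qed



lemma gen_avoid:
  assumes LX: "\<forall>L\<in>Lines. card L = 4"
  and uniq: "\<forall>L1\<in>Lines. \<forall>L2\<in>Lines. \<forall>x y. x\<noteq>y \<and> x\<in>L1 \<and> y\<in>L1 \<and> x\<in>L2 \<and> y\<in>L2 \<longrightarrow> L1 = L2"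
  shows "\<not> has_config m (insert {} {S. \<exists>L\<in>Lines. S \<subseteq> L}) 3 4 matA"
proof
  assume "has_config m (insert {} {S. \<exists>L\<in>Lines. S \<subseteq> L}) 3 4 matA"
  then obtain r c where ri: "inj_on r {..<3}" and ci: "inj_on c {..<4}"
    and cF: "c ` {..<4} \<subseteq> insert {} {S. \<exists>L\<in>Lines. S \<subseteq> L}"
    and M: "\<forall>i<3. \<forall>j<4. (r i \<in> c j) = matA i j"
    unfolding has_config_def by (elim exE conjE) (rule that; assumption)
  define i where "i = r 0"
  define j where "j = r 1"
  define l where "l = r 2"
  have rinj: "\<And>a b. a < 3 \<Longrightarrow> b < 3 \<Longrightarrow> r a = r b \<Longrightarrow> a = b"
    using ri unfolding inj_on_def by simp
  have ij: "i \<noteq> j" "i \<noteq> l" "j \<noteq> l" unfolding i_def j_def l_def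
    using rinj[of 0 1] rinj[of 0 2] rinj[of 1 2] by auto
  have inc: "\<And>t. t < 4 \<Longrightarrow> i \<in> c t \<and> j \<in> c t" using M unfolding i_def j_def matA_def by auto
  have l0: "l \<in> c 0" using M unfolding l_def matA_def by auto
  have ln: "\<And>t. 0 < t \<Longrightarrow> t < 4 \<Longrightarrow> l \<notin> c t" using M unfolding l_def matA_def by auto
  have lin: "\<And>t. t < 4 \<Longrightarrow> \<exists>L\<in>Lines. c t \<subseteq> L"
  proof -
    fix t :: nat assume t: "t < 4"
    then have "c t \<in> insert {} {S. \<exists>L\<in>Lines. S \<subseteq> L}" using cF by auto
    moreover have "c t \<noteq> {}" using inc[OF t] by auto
    ultimately show "\<exists>L\<in>Lines. c t \<subseteq> L" by auto
  qed
  obtain L where L: "L \<in> Lines" "c 0 \<subseteq> L" using lin[of 0] by auto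
  have same: "\<And>t. t < 4 \<Longrightarrow> c t \<subseteq> L"
  proof -
    fix t :: nat assume t: "t < 4"
    obtain L' where L': "L' \<in> Lines" "c t \<subseteq> L'" using lin[OF t] by auto
    have "L' = L" using uniq[rule_format, of L' L i j] L L' inc[OF t] inc[of 0] ij by auto
    then show "c t \<subseteq> L" using L' by simp
  qed
  have cL: "card L = 4" using LX L by auto
  have fL: "finite L" using cL by (metis card.infinite zero_neq_numeral)
  have ijlL: "{i,j,l} \<subseteq> L" using same[of 0] inc[of 0] l0 by auto
  have "card (L - {i,j,l}) = 1" using cL ijlL ij fL by (simp add: card_Diff_subset)
  then obtain q where q: "L - {i,j,l} = {q}" by (meson card_1_singletonE)
  have Leq: "L \<subseteq> {i,j,l,q}" using q by auto
  have opts: "\<And>t. 0 < t \<Longrightarrow> t < 4 \<Longrightarrow> c t = {i,j} \<or> c t = {i,j,q}"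
  proof -
    fix t :: nat assume t: "0 < t" "t < 4"
    have "c t \<subseteq> {i,j,q}" using same[of t] Leq ln[OF t] t by auto
    moreover have "{i,j} \<subseteq> c t" using inc[of t] t by auto
    ultimately show "c t = {i,j} \<or> c t = {i,j,q}" by blast
  qed
  have cinj: "\<And>a b. a < 4 \<Longrightarrow> b < 4 \<Longrightarrow> c a = c b \<Longrightarrow> a = b"
    using ci unfolding inj_on_def by simp
  have d12: "c 1 \<noteq> c 2" "c 1 \<noteq> c 3" "c 2 \<noteq> c 3" using cinj[of 1 2] cinj[of 1 3] cinj[of 2 3] by auto
  show False using opts[of 1] opts[of 2] opts[of 3] d12 by auto
qed


lemma card_sub3: assumes "card (L::'a set) = 4" shows "card {S. S \<subseteq> L \<and> 3 \<le> card S} = 5"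
proof -
  have fL: "finite L" using assms by (metis card.infinite zero_neq_numeral)
  have le: "S \<subseteq> L \<Longrightarrow> card S \<le> 4" for S using card_mono[OF fL, of S] assms by simp
  have eq: "{S. S \<subseteq> L \<and> 3 \<le> card S} = {S. S \<subseteq> L \<and> card S = 3} \<union> {S. S \<subseteq> L \<and> card S = 4}"
  proof (rule set_eqI)
    fix S
    show "S \<in> {S. S \<subseteq> L \<and> 3 \<le> card S} \<longleftrightarrow> S \<in> {S. S \<subseteq> L \<and> card S = 3} \<union> {S. S \<subseteq> L \<and> card S = 4}"
      using le[of S] by auto
  qed
  have f3: "finite {S. S \<subseteq> L \<and> card S = 3}" by (rule finite_subset[of _ "Pow L"]) (auto simp: fL)
  have f4: "finite {S. S \<subseteq> L \<and> card S = 4}" by (rule finite_subset[of _ "Pow L"]) (auto simp: fL)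
  have dj: "{S. S \<subseteq> L \<and> card S = 3} \<inter> {S. S \<subseteq> L \<and> card S = 4} = {}" by auto
  have "card ({S. S \<subseteq> L \<and> card S = 3} \<union> {S. S \<subseteq> L \<and> card S = 4}) = 4 + 1"
    using card_Un_disjoint[OF f3 f4 dj] n_subsets[OF fL, of 3] n_subsets[OF fL, of 4] assms by (simp add: numeral_eq_Suc)
  then show ?thesis using eq by simp
qed

lemma gen_count:
  fixes Lines :: "nat set set"
  assumes m2: "2 \<le> m" and LX: "\<forall>L\<in>Lines. L \<subseteq> {..<m} \<and> card L = 4"
  and cov: "\<forall>x<m. \<forall>y<m. x\<noteq>y \<longrightarrow> (\<exists>L\<in>Lines. x\<in>L \<and> y\<in>L)"
  and uniq: "\<forall>L1\<in>Lines. \<forall>L2\<in>Lines. \<forall>x y. x\<noteq>y \<and> x\<in>L1 \<and> y\<in>L1 \<and> x\<in>L2 \<and> y\<in>L2 \<longrightarrow> L1 = L2"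
  shows "11/6 * real (m choose 2) + m + 1 \<le> real (card (insert {} {S. \<exists>L\<in>Lines. S \<subseteq> L}))"
proof -
  define F where "F = insert {} {S. \<exists>L\<in>Lines. S \<subseteq> L}"
  define P where "P k = {S. S \<subseteq> {..<m} \<and> card S = k}" for k
  define sub where "sub k L = {S. S \<subseteq> L \<and> k \<le> card S}" for k and L :: "nat set"
  define sub2 where "sub2 L = {S. S \<subseteq> L \<and> card S = 2}" for L :: "nat set"
  define T where "T = (\<Union>L\<in>Lines. sub 3 L)"
  have finLines: "finite Lines" by (rule finite_subset[of _ "Pow {..<m}"]) (use LX in auto)
  have fF: "finite F" unfolding F_def by (rule finite_subset[of _ "Pow {..<m}"]) (use LX in auto)
  have cP: "card (P k) = m choose k" for k unfolding P_def using n_subsets[of "{..<m}" k] by simp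
  have fP: "finite (P k)" for k unfolding P_def by (rule finite_subset[of _ "Pow {..<m}"]) auto
  have fL: "finite L" if "L \<in> Lines" for L
  proof -
    have "L \<subseteq> {..<m}" using LX that by blast
    then show ?thesis by (rule finite_subset) simp
  qed
  have fsub: "finite (sub 3 L)" if "L \<in> Lines" for L
    unfolding sub_def by (rule finite_subset[of _ "Pow L"]) (use fL[OF that] in auto)
  have cT: "card T = 5 * card Lines"
  proof -
    have "card T = (\<Sum>L\<in>Lines. card (sub 3 L))"
      unfolding T_def
    proof (rule card_UN_disjoint[OF finLines])
      show "\<forall>L\<in>Lines. finite (sub 3 L)" using fsub by blast
      show "\<forall>L1\<in>Lines. \<forall>L2\<in>Lines. L1 \<noteq> L2 \<longrightarrow> sub 3 L1 \<inter> sub 3 L2 = {}"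
      proof (intro ballI impI)
        fix L1 L2 assume h: "L1 \<in> Lines" "L2 \<in> Lines" "L1 \<noteq> L2"
        show "sub 3 L1 \<inter> sub 3 L2 = {}"
        proof (rule ccontr)
          assume "sub 3 L1 \<inter> sub 3 L2 \<noteq> {}"
          then obtain S where S: "S \<subseteq> L1" "S \<subseteq> L2" "3 \<le> card S" unfolding sub_def by auto
          have "S \<noteq> {}" using S(3) by (intro notI) simp
          then obtain x where x: "x \<in> S" by blast
          have "S - {x} \<noteq> {}"
          proof
            assume "S - {x} = {}"
            then have "S = {x}" using x by blast
            then show False using S(3) by simp
          qed
          then obtain y where "y \<in> S - {x}" by blast
          then have xy: "x \<in> S" "y \<in> S" "x \<noteq> y" using x by auto
          then show False using uniq[rule_format, of L1 L2 x y] h S by auto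
        qed
      qed
    qed
    also have "\<dots> = (\<Sum>L\<in>Lines. 5)" using card_sub3 LX unfolding sub_def by (intro sum.cong) auto
    finally show ?thesis by simp
  qed
  have c2: "m choose 2 \<le> 6 * card Lines"
  proof -
    have "P 2 \<subseteq> (\<Union>L\<in>Lines. sub2 L)"
    proof
      fix S assume "S \<in> P 2"
      then obtain x y where xy: "S = {x,y}" "x \<noteq> y" "x < m" "y < m" unfolding P_def
        by (auto simp: card_2_iff)
      then obtain L where "L \<in> Lines" "x \<in> L" "y \<in> L" using cov by blast
      then show "S \<in> (\<Union>L\<in>Lines. sub2 L)" using xy unfolding sub2_def by auto
    qed
    moreover have "finite (\<Union>L\<in>Lines. sub2 L)"
    proof (rule finite_UN_I[OF finLines])
      fix L assume "L \<in> Lines"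
      then have "finite L" by (rule fL)
      then show "finite (sub2 L)" unfolding sub2_def by - (rule finite_subset[of _ "Pow L"], auto)
    qed
    ultimately have "card (P 2) \<le> card (\<Union>L\<in>Lines. sub2 L)" by (simp add: card_mono)
    also have "\<dots> \<le> (\<Sum>L\<in>Lines. card (sub2 L))" by (rule card_UN_le[OF finLines])
    also have "\<dots> = (\<Sum>L\<in>Lines. 6)"
    proof (rule sum.cong)
      fix L assume h: "L \<in> Lines"
      have "card L = 4" using LX h by blast
      then show "card (sub2 L) = 6" using n_subsets[OF fL[OF h], of 2] unfolding sub2_def
        by (simp add: numeral_eq_Suc)
    qed simp
    finally show ?thesis using cP by simp
  qed
  have sub: "{{}} \<union> P 1 \<union> P 2 \<union> T \<subseteq> F"
  proof -
    have "P 1 \<subseteq> F"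
    proof
      fix S assume "S \<in> P 1"
      then obtain x where x: "S = {x}" "x < m" unfolding P_def by (auto simp: card_1_singleton_iff)
      define y where "y = (if x = 0 then 1 else 0::nat)"
      have "y < m" "x \<noteq> y" using m2 unfolding y_def by auto
      then obtain L where "L \<in> Lines" "x \<in> L" "y \<in> L" using cov x by blast
      then show "S \<in> F" using x unfolding F_def by auto
    qed
    moreover have "P 2 \<subseteq> F"
    proof
      fix S assume "S \<in> P 2"
      then obtain x y where xy: "S = {x,y}" "x \<noteq> y" "x < m" "y < m" unfolding P_def
        by (auto simp: card_2_iff)
      then obtain L where "L \<in> Lines" "x \<in> L" "y \<in> L" using cov by blast
      then show "S \<in> F" using xy unfolding F_def by auto
    qed
    moreover have "T \<subseteq> F" unfolding T_def F_def sub_def by auto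
    ultimately show ?thesis unfolding F_def by auto
  qed
  have fT: "finite T" unfolding T_def using finLines fsub by blast
  have "card ({{}} \<union> P 1 \<union> P 2 \<union> T) = 1 + card (P 1) + card (P 2) + card T"
  proof -
    have d1: "({{}} \<union> P 1 \<union> P 2) \<inter> T = {}" unfolding P_def T_def sub_def by auto
    have d2: "({{}} \<union> P 1) \<inter> P 2 = {}" unfolding P_def by auto
    have d3: "{{}} \<inter> P 1 = {}" unfolding P_def by auto
    show ?thesis
      by (simp only: card_Un_disjoint[OF _ fT d1] card_Un_disjoint[OF _ fP d2]
          card_Un_disjoint[OF _ fP d3] finite_Un finite.intros fP card.insert card.empty)
         simp
  qed
  then have "1 + m + (m choose 2) + 5 * card Lines \<le> card F"
    using card_mono[OF fF sub] cP cT by simp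
  then have "real (1 + m + (m choose 2) + 5 * card Lines) \<le> real (card F)" by linarith
  moreover have "real (m choose 2) \<le> 6 * real (card Lines)" using c2 by linarith
  ultimately show ?thesis unfolding F_def by simp
qed



lemma forb_ge:
  fixes Lines :: "nat set set"
  assumes m2: "2 \<le> m" and LX: "\<forall>L\<in>Lines. L \<subseteq> {..<m} \<and> card L = 4"
  and cov: "\<forall>x<m. \<forall>y<m. x\<noteq>y \<longrightarrow> (\<exists>L\<in>Lines. x\<in>L \<and> y\<in>L)"
  and uniq: "\<forall>L1\<in>Lines. \<forall>L2\<in>Lines. \<forall>x y. x\<noteq>y \<and> x\<in>L1 \<and> y\<in>L1 \<and> x\<in>L2 \<and> y\<in>L2 \<longrightarrow> L1 = L2"
  shows "11/6 * real (m choose 2) + m + 1 \<le> real (forb m 3 4 matA)"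
proof -
  define F where "F = insert {} {S. \<exists>L\<in>Lines. S \<subseteq> L}"
  have c: "11/6 * real (m choose 2) + m + 1 \<le> real (card F)"
    unfolding F_def by (rule gen_count[OF m2 LX cov uniq])
  have sm: "simple_matrix m F" unfolding simple_matrix_def F_def using LX by auto
  have nc: "\<not> has_config m F 3 4 matA" unfolding F_def
    by (rule gen_avoid) (use LX uniq in auto)
  have fin: "finite {card Fam | Fam. simple_matrix m Fam \<and> \<not> has_config m Fam 3 4 matA}"
  proof (rule finite_subset[of _ "card ` Pow (Pow {..<m})"])
    show "{card Fam | Fam. simple_matrix m Fam \<and> \<not> has_config m Fam 3 4 matA} \<subseteq> card ` Pow (Pow {..<m})"
      unfolding simple_matrix_def by auto
  qed simp
  have "card F \<le> forb m 3 4 matA" unfolding forb_def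
    by (rule Max_ge[OF fin]) (use sm nc in blast)
  then show ?thesis using c by linarith
qed

lemma card_X: "card {xs::f4 list. length xs = N} = 4 ^ N"
proof -
  have "{xs::f4 list. length xs = N} = {xs. set xs \<subseteq> UNIV \<and> length xs = N}" by simp
  moreover have "card (UNIV :: f4 set) = 4" unfolding f4_univ by simp
  moreover have "finite (UNIV :: f4 set)" unfolding f4_univ by simp
  ultimately show ?thesis using card_lists_length_eq[of "UNIV :: f4 set" N] by simp
qed

lemma fin_X: "finite {xs::f4 list. length xs = N}"
proof -
  have "{xs::f4 list. length xs = N} = {xs. set xs \<subseteq> {Z,I,W,V} \<and> length xs = N}"
    using f4_univ by auto
  then show ?thesis using finite_lists_length_eq[of "{Z,I,W,V}" N] by simp
qed

lemma AG_lines: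
  "\<exists>Lines::nat set set. (\<forall>L\<in>Lines. L \<subseteq> {..<4^N} \<and> card L = 4) \<and>
     (\<forall>x<4^N. \<forall>y<4^N. x\<noteq>y \<longrightarrow> (\<exists>L\<in>Lines. x\<in>L \<and> y\<in>L)) \<and>
     (\<forall>L1\<in>Lines. \<forall>L2\<in>Lines. \<forall>x y. x\<noteq>y \<and> x\<in>L1 \<and> y\<in>L1 \<and> x\<in>L2 \<and> y\<in>L2 \<longrightarrow> L1 = L2)"
proof -
  define X where "X = {xs::f4 list. length xs = N}"
  obtain h where h: "bij_betw h X {..<(4::nat)^N}"
    using finite_same_card_bij[of X "{..<(4::nat)^N}"] fin_X card_X unfolding X_def by auto
  have hinj: "inj_on h X" and hX: "h ` X = {..<4^N}" using h by (auto simp: bij_betw_def)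
  define L0 where "L0 = {Lin p q | p q. p \<in> X \<and> q \<in> X \<and> p \<noteq> q}"
  define Lines where "Lines = (\<lambda>A. h ` A) ` L0"
  have L0X: "A \<subseteq> X" if "A \<in> L0" for A
    using that unfolding L0_def X_def by (auto intro: Lin_len)
  have L0c: "card A = 4" if "A \<in> L0" for A
    using that Lin_card unfolding L0_def X_def by auto
  have P1: "\<forall>L\<in>Lines. L \<subseteq> {..<4^N} \<and> card L = 4"
  proof
    fix L assume "L \<in> Lines"
    then obtain A where A: "A \<in> L0" "L = h ` A" unfolding Lines_def by auto
    have "inj_on h A" using hinj L0X[OF A(1)] inj_on_subset by blast
    then have "card L = 4" using A L0c card_image by metis
    moreover have "L \<subseteq> {..<4^N}" using A L0X hX by blast
    ultimately show "L \<subseteq> {..<4^N} \<and> card L = 4" by simp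
  qed
  have P2: "\<forall>x<4^N. \<forall>y<4^N. x\<noteq>y \<longrightarrow> (\<exists>L\<in>Lines. x\<in>L \<and> y\<in>L)"
  proof (intro allI impI)
    fix x y :: nat assume xy: "x < 4^N" "y < 4^N" "x \<noteq> y"
    obtain a where a: "a \<in> X" "h a = x" using xy(1) hX by (metis imageE lessThan_iff)
    obtain b where b: "b \<in> X" "h b = y" using xy(2) hX by (metis imageE lessThan_iff)
    have ab: "a \<noteq> b" using a b xy by auto
    have "Lin a b \<in> L0" unfolding L0_def using a b ab by blast
    moreover have "a \<in> Lin a b" "b \<in> Lin a b" using a b Lin_p Lin_q unfolding X_def by auto
    ultimately show "\<exists>L\<in>Lines. x\<in>L \<and> y\<in>L" unfolding Lines_def using a b by blast
  qed
  have P3: "\<forall>L1\<in>Lines. \<forall>L2\<in>Lines. \<forall>x y. x\<noteq>y \<and> x\<in>L1 \<and> y\<in>L1 \<and> x\<in>L2 \<and> y\<in>L2 \<longrightarrow> L1 = L2"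
  proof (intro ballI allI impI)
    fix L1 L2 x y assume L: "L1 \<in> Lines" "L2 \<in> Lines"
      and xy: "x\<noteq>y \<and> x\<in>L1 \<and> y\<in>L1 \<and> x\<in>L2 \<and> y\<in>L2"
    obtain A where A: "A \<in> L0" "L1 = h ` A" using L(1) unfolding Lines_def by auto
    obtain B where B: "B \<in> L0" "L2 = h ` B" using L(2) unfolding Lines_def by auto
    obtain p q where pq: "A = Lin p q" "p \<in> X" "q \<in> X" "p \<noteq> q" using A(1) unfolding L0_def by auto
    obtain p' q' where pq': "B = Lin p' q'" "p' \<in> X" "q' \<in> X" "p' \<noteq> q'" using B(1) unfolding L0_def by auto
    obtain a1 where a1: "a1 \<in> A" "h a1 = x" using xy A by auto
    obtain a2 where a2: "a2 \<in> B" "h a2 = x" using xy B by auto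
    obtain b1 where b1: "b1 \<in> A" "h b1 = y" using xy A by auto
    obtain b2 where b2: "b2 \<in> B" "h b2 = y" using xy B by auto
    have "a1 = a2" using a1 a2 hinj L0X A(1) B(1) unfolding inj_on_def by blast
    moreover have "b1 = b2" using b1 b2 hinj L0X A(1) B(1) unfolding inj_on_def by blast
    moreover have "a1 \<noteq> b1" using a1 b1 xy by auto
    ultimately have "Lin a1 b1 = A" "Lin a1 b1 = B"
      using Lin_eq[of p q a1 b1] Lin_eq[of p' q' a1 b1] pq pq' a1 b1 a2 b2 unfolding X_def by auto
    then show "L1 = L2" using A B by simp
  qed
  show ?thesis using P1 P2 P3 by blast
qed

theorem mainTheorem3:
  fixes k :: nat
  assumes "k \<ge> 1"
  shows "\<exists>m::nat. m \<le> 64 * k + 1 \<and>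
           real (forb m 3 4 matA) \<ge> 5/3 * real (m choose 2) + real (m choose 1) + real (m choose 0) + real k"
proof -
  define S where "S = {N::nat. 4^N \<le> 64 * k}"
  have finS: "finite S"
  proof (rule finite_subset[of _ "{..64*k}"])
    show "S \<subseteq> {..64*k}"
    proof
      fix N assume "N \<in> S"
      then have "4^N \<le> 64*k" unfolding S_def by simp
      moreover have "N < 4^N" by (induct N) auto
      ultimately show "N \<in> {..64*k}" by simp
    qed
  qed simp
  have "3 \<in> S" unfolding S_def using assms by simp
  define N where "N = Max S"
  have NS: "N \<in> S" unfolding N_def using finS \<open>3 \<in> S\<close> by (intro Max_in) auto
  have N3: "3 \<le> N" unfolding N_def using finS \<open>3 \<in> S\<close> by (simp add: Max_ge)
  have "Suc N \<notin> S" using Max_ge[OF finS, of "Suc N"] unfolding N_def[symmetric] by auto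
  then have big: "64 * k < 4 * 4^N" unfolding S_def by simp
  define m where "m = (4::nat)^N"
  have mle: "m \<le> 64*k" using NS unfolding S_def m_def by simp
  have mgt: "16 * k < m" using big unfolding m_def by simp
  have "(4::nat)^3 \<le> 4^N" using N3 by (intro power_increasing) auto
  then have m64: "64 \<le> m" unfolding m_def by simp
  obtain Lines where LX: "\<forall>L\<in>Lines. L \<subseteq> {..<m} \<and> card L = 4"
    and cov: "\<forall>x<m. \<forall>y<m. x\<noteq>y \<longrightarrow> (\<exists>L\<in>Lines. x\<in>L \<and> y\<in>L)"
    and uniq: "\<forall>L1\<in>Lines. \<forall>L2\<in>Lines. \<forall>x y. x\<noteq>y \<and> x\<in>L1 \<and> y\<in>L1 \<and> x\<in>L2 \<and> y\<in>L2 \<longrightarrow> L1 = L2"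
    using AG_lines[of N] unfolding m_def by blast
  have fb: "11/6 * real (m choose 2) + m + 1 \<le> real (forb m 3 4 matA)"
    by (rule forb_ge[OF _ LX cov uniq]) (use m64 in simp)
  have "16 * k \<le> m - 1" using mgt by simp
  moreover have "17 \<le> m" using m64 by simp
  ultimately have "17 * (16 * k) \<le> m * (m - 1)" by (intro mult_le_mono)
  then have "12 * k \<le> m * (m - 1)" by simp
  then have "6 * k \<le> m choose 2" unfolding choose_two by simp
  then have "real k \<le> real (m choose 2) / 6" by simp
  then show ?thesis using fb mle by (intro exI[of _ m]) simp
qed

end
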